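(* Let $\lambda$ be a cardinal and assume $MA_\lambda(K)$. Then for every natural number $k$ and every $(k+1,\omega)$-almost disjoint family $\mathcal A$ of finite subsets of $\lambda$ such that $|A|>2k$ for all $A\in\mathcal A$, we have $\chi_{\rm CF}(\mathcal A)\le\omega$.
   Context: $MA_\lambda(K)$ is Martin's Axiom for $\lambda$ dense sets restricted to partial orders with property K (every uncountable set of conditions has an uncountable subset of pairwise compatible conditions). A family $\mathcal A$ is $(\mu,\nu)$-almost disjoint if $|\bigcap\mathcal B|<\mu$ for every $\mathcal B\subseteq\mathcal A$ with $|\mathcal B|=\nu$. A conflict free coloring of $\mathcal A$ with $\rho$ colors is $f:\bigcup\mathcal A\to\rho$ such that every $A\in\mathcal A$ has some $\zeta$ with $|A\cap f^{-1}\{\zeta\}|=1$; $\chi_{\rm CF}(\mathcal A)$ is the least such $\rho$. *)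

theory Defs
  imports Main "HOL-Library.Countable_Set" "HOL-Library.Equipollence"
begin

definition partial_order_on' :: "'p set \<Rightarrow> ('p \<Rightarrow> 'p \<Rightarrow> bool) \<Rightarrow> bool" where
  "partial_order_on' P le \<longleftrightarrow>
     (\<forall>p\<in>P. le p p) \<and>
     (\<forall>p\<in>P. \<forall>q\<in>P. \<forall>r\<in>P. le p q \<longrightarrow> le q r \<longrightarrow> le p r) \<and>
     (\<forall>p\<in>P. \<forall>q\<in>P. le p q \<longrightarrow> le q p \<longrightarrow> p = q)"

definition compatible :: "'p set \<Rightarrow> ('p \<Rightarrow> 'p \<Rightarrow> bool) \<Rightarrow> 'p \<Rightarrow> 'p \<Rightarrow> bool" where
  "compatible P le p q \<longleftrightarrow> (\<exists>r\<in>P. le r p \<and> le r q)"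

definition property_K :: "'p set \<Rightarrow> ('p \<Rightarrow> 'p \<Rightarrow> bool) \<Rightarrow> bool" where
  "property_K P le \<longleftrightarrow>
     (\<forall>S\<subseteq>P. uncountable S \<longrightarrow>
        (\<exists>T\<subseteq>S. uncountable T \<and> (\<forall>p\<in>T. \<forall>q\<in>T. compatible P le p q)))"

definition dense_in :: "'p set \<Rightarrow> ('p \<Rightarrow> 'p \<Rightarrow> bool) \<Rightarrow> 'p set \<Rightarrow> bool" where
  "dense_in P le D \<longleftrightarrow> D \<subseteq> P \<and> (\<forall>p\<in>P. \<exists>d\<in>D. le d p)"

definition filter_in :: "'p set \<Rightarrow> ('p \<Rightarrow> 'p \<Rightarrow> bool) \<Rightarrow> 'p set \<Rightarrow> bool" where
  "filter_in P le G \<longleftrightarrow> G \<subseteq> P \<and> G \<noteq> {} \<and>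
     (\<forall>p\<in>G. \<forall>q\<in>P. le p q \<longrightarrow> q \<in> G) \<and>
     (\<forall>p\<in>G. \<forall>q\<in>G. \<exists>r\<in>G. le r p \<and> le r q)"

text \<open>MA_lambda(K), with the cardinal lambda given as the cardinality of a set L,
  for (nonempty) partial orders whose conditions live in the type 'p.\<close>
definition MA_K :: "'p itself \<Rightarrow> 'l set \<Rightarrow> bool" where
  "MA_K (_::'p itself) L \<longleftrightarrow>
     (\<forall>(P::'p set) le. P \<noteq> {} \<and> partial_order_on' P le \<and> property_K P le \<longrightarrow>
        (\<forall>\<D>. \<D> \<lesssim> L \<and> (\<forall>D\<in>\<D>. dense_in P le D) \<longrightarrow>
           (\<exists>G. filter_in P le G \<and> (\<forall>D\<in>\<D>. G \<inter> D \<noteq> {}))))"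

text \<open>(mu,nu)-almost disjoint, for a finite mu (a natural number) and nu
  given as the cardinality of a set N.\<close>
definition almost_disjoint :: "nat \<Rightarrow> 'n set \<Rightarrow> 'a set set \<Rightarrow> bool" where
  "almost_disjoint \<mu> N \<A> \<longleftrightarrow>
     (\<forall>\<B>\<subseteq>\<A>. \<B> \<approx> N \<longrightarrow> finite (\<Inter>\<B>) \<and> card (\<Inter>\<B>) < \<mu>)"

definition cf_coloring :: "'a set set \<Rightarrow> ('a \<Rightarrow> 'c) \<Rightarrow> 'c set \<Rightarrow> bool" where
  "cf_coloring \<A> f \<rho> \<longleftrightarrow> f ` (\<Union>\<A>) \<subseteq> \<rho> \<and>
     (\<forall>A\<in>\<A>. \<exists>\<zeta>. card (A \<inter> f -` {\<zeta>}) = 1)"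

text \<open>chi_CF(A) <= |rho|\<close>
definition cf_colorable :: "'a set set \<Rightarrow> 'c set \<Rightarrow> bool" where
  "cf_colorable \<A> \<rho> \<longleftrightarrow> (\<exists>f. cf_coloring \<A> f \<rho>)"

end

theory Submission
  imports Defs
begin


lemma unc_pigeon:
  assumes "uncountable S" "countable (f ` S)"
  shows "\<exists>c. uncountable {s\<in>S. f s = c}"
proof (rule ccontr)
  assume "\<not> ?thesis"
  hence "countable (\<Union>c\<in>f ` S. {s\<in>S. f s = c})" using assms(2) by (intro countable_UN) auto
  moreover have "(\<Union>c\<in>f ` S. {s\<in>S. f s = c}) = S" by auto
  ultimately show False using assms(1) by simp
qed

lemma disj_family:
  assumes unc: "uncountable F" and ne: "\<forall>a\<in>F. finite a \<and> a \<noteq> {}"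
    and cnt: "\<forall>x. countable {a\<in>F. x \<in> a}"
  shows "\<exists>G\<subseteq>F. uncountable G \<and> (\<forall>a\<in>G. \<forall>b\<in>G. a \<noteq> b \<longrightarrow> a \<inter> b = {})"
proof -
  let ?A = "{M. M \<subseteq> F \<and> (\<forall>a\<in>M. \<forall>b\<in>M. a \<noteq> b \<longrightarrow> a \<inter> b = {})}"
  have "\<forall>C\<in>chains ?A. \<Union>C \<in> ?A"
  proof
    fix C assume C: "C \<in> chains ?A"
    hence CA: "C \<subseteq> ?A" and ch: "\<And>M1 M2. M1 \<in> C \<Longrightarrow> M2 \<in> C \<Longrightarrow> M1 \<subseteq> M2 \<or> M2 \<subseteq> M1"
      by (auto simp: chains_def chain_subset_def)
    have 1: "\<Union>C \<subseteq> F" using CA by auto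
    have 2: "\<forall>a\<in>\<Union>C. \<forall>b\<in>\<Union>C. a \<noteq> b \<longrightarrow> a \<inter> b = {}"
    proof (intro ballI impI)
      fix a b assume "a \<in> \<Union>C" "b \<in> \<Union>C" "a \<noteq> b"
      then obtain M1 M2 where M: "M1 \<in> C" "M2 \<in> C" "a \<in> M1" "b \<in> M2" by auto
      show "a \<inter> b = {}"
      proof (cases "M1 \<subseteq> M2")
        case True
        have "M2 \<in> ?A" using CA M by blast
        thus ?thesis using True M \<open>a \<noteq> b\<close> by blast
      next
        case False
        hence "M2 \<subseteq> M1" using ch M by blast
        have "M1 \<in> ?A" using CA M by blast
        thus ?thesis using \<open>M2 \<subseteq> M1\<close> M \<open>a \<noteq> b\<close> by blast
      qed
    qed
    show "\<Union>C \<in> ?A" using 1 2 by simp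
  qed
  from Zorn_Lemma[OF this] obtain M where M: "M \<in> ?A" and max: "\<forall>X\<in>?A. M \<subseteq> X \<longrightarrow> X = M" by blast
  have "uncountable M"
  proof
    assume cM: "countable M"
    have "countable (\<Union>a\<in>M. a)"
    proof (rule countable_UN[OF cM])
      fix a assume "a \<in> M" thus "countable a" using M ne by (auto intro: countable_finite)
    qed
    hence "countable (\<Union>M)" by simp
    hence c2: "countable (\<Union>x\<in>\<Union>M. {a\<in>F. x \<in> a})" using cnt by (intro countable_UN) auto
    have "\<not> F \<subseteq> (\<Union>x\<in>\<Union>M. {a\<in>F. x \<in> a})" using c2 unc countable_subset by blast
    then obtain a where a: "a \<in> F" "\<forall>x\<in>\<Union>M. x \<notin> a" by blast
    have "a \<notin> M" using a ne by auto
    have "insert a M \<in> ?A" using M a by auto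
    moreover have "M \<subseteq> insert a M" by blast
    ultimately have "insert a M = M" using max by simp
    with \<open>a \<notin> M\<close> show False by blast
  qed
  thus ?thesis using M by blast
qed


lemma delta_n:
  "\<forall>F. uncountable F \<longrightarrow> (\<forall>a\<in>F. finite a \<and> card a = n) \<longrightarrow>
     (\<exists>G\<subseteq>F. uncountable G \<and> (\<exists>R. \<forall>a\<in>G. \<forall>b\<in>G. a \<noteq> b \<longrightarrow> a \<inter> b = R))"
proof (induction n)
  case 0
  show ?case
  proof (intro allI impI)
    fix F :: "'a set set" assume u: "uncountable F" and h: "\<forall>a\<in>F. finite a \<and> card a = 0"
    hence "F \<subseteq> {{}}" by auto
    hence "countable F" by (rule countable_subset) simp
    with u show "\<exists>G\<subseteq>F. uncountable G \<and> (\<exists>R. \<forall>a\<in>G. \<forall>b\<in>G. a \<noteq> b \<longrightarrow> a \<inter> b = R)" by blast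
  qed
next
  case (Suc n)
  show ?case
  proof (intro allI impI)
    fix F :: "'a set set" assume u: "uncountable F" and h: "\<forall>a\<in>F. finite a \<and> card a = Suc n"
    show "\<exists>G\<subseteq>F. uncountable G \<and> (\<exists>R. \<forall>a\<in>G. \<forall>b\<in>G. a \<noteq> b \<longrightarrow> a \<inter> b = R)"
    proof (cases "\<exists>x. uncountable {a\<in>F. x \<in> a}")
      case True
      then obtain x where ux: "uncountable {a\<in>F. x \<in> a}" by blast
      let ?F' = "(\<lambda>a. a - {x}) ` {a\<in>F. x \<in> a}"
      have inj: "inj_on (\<lambda>a. a - {x}) {a\<in>F. x \<in> a}" by (rule inj_onI) (metis (no_types, lifting) insert_Diff mem_Collect_eq)
      have "uncountable ?F'" using ux inj countable_image_inj_on by blast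
      have h': "\<And>a. a\<in>?F' \<Longrightarrow> finite a \<and> card a = n" using h by auto
      have ex: "\<exists>G'\<subseteq>?F'. uncountable G' \<and> (\<exists>R. \<forall>a\<in>G'. \<forall>b\<in>G'. a \<noteq> b \<longrightarrow> a \<inter> b = R)"
        by (rule Suc.IH[rule_format, OF \<open>uncountable ?F'\<close> h'])
      then obtain G' where G'12: "G' \<subseteq> ?F' \<and> uncountable G'" and
        "\<exists>R. \<forall>a\<in>G'. \<forall>b\<in>G'. a \<noteq> b \<longrightarrow> a \<inter> b = R" by (elim exE conjE) simp
      then obtain R where G'3: "\<forall>a\<in>G'. \<forall>b\<in>G'. a \<noteq> b \<longrightarrow> a \<inter> b = R" by (elim exE)
      have G': "G' \<subseteq> ?F'" "uncountable G'" "\<forall>a\<in>G'. \<forall>b\<in>G'. a \<noteq> b \<longrightarrow> a \<inter> b = R"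
        using G'12 G'3 by simp_all
      let ?G = "{a\<in>F. x \<in> a \<and> a - {x} \<in> G'}"
      have "(\<lambda>a. a - {x}) ` ?G = G'" using G'(1) by auto
      hence "uncountable ?G" using G'(2) countable_image[of ?G "\<lambda>a. a - {x}"] by auto
      moreover have "\<forall>a\<in>?G. \<forall>b\<in>?G. a \<noteq> b \<longrightarrow> a \<inter> b = insert x R"
      proof (intro ballI impI)
        fix a b assume a: "a \<in> ?G" and b: "b \<in> ?G" and ne: "a \<noteq> b"
        have xa: "x \<in> a" and xb: "x \<in> b" and a': "a - {x} \<in> G'" and b': "b - {x} \<in> G'" using a b by auto
        have "a - {x} \<noteq> b - {x}"
        proof
          assume "a - {x} = b - {x}"
          hence "insert x (a - {x}) = insert x (b - {x})" by simp
          hence "a = b" using insert_Diff[OF xa] insert_Diff[OF xb] by simp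
          with ne show False by simp
        qed
        hence "(a - {x}) \<inter> (b - {x}) = R" using G'(3) a' b' by simp
        moreover have "a \<inter> b = insert x ((a - {x}) \<inter> (b - {x}))" using xa xb by auto
        ultimately show "a \<inter> b = insert x R" by simp
      qed
      moreover have "?G \<subseteq> F" by blast
      ultimately show ?thesis by (intro exI[of _ ?G]) blast
    next
      case False
      have "\<forall>a\<in>F. finite a \<and> a \<noteq> {}" using h by auto
      moreover have "\<forall>x. countable {a\<in>F. x \<in> a}" using False by blast
      ultimately obtain G where "G \<subseteq> F" "uncountable G" "\<forall>a\<in>G. \<forall>b\<in>G. a \<noteq> b \<longrightarrow> a \<inter> b = {}"
        using disj_family[OF u] by blast
      thus ?thesis by blast
    qed
  qed
qed

lemma delta_system:
  assumes "uncountable F" "\<forall>a\<in>F. finite a"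
  shows "\<exists>G\<subseteq>F. uncountable G \<and> (\<exists>R. \<forall>a\<in>G. \<forall>b\<in>G. a \<noteq> b \<longrightarrow> a \<inter> b = R)"
proof -
  have "countable (card ` F)" by simp
  from unc_pigeon[OF assms(1) this] obtain n where n: "uncountable {a\<in>F. card a = n}" by blast
  have "\<And>a. a\<in>{a\<in>F. card a = n} \<Longrightarrow> finite a \<and> card a = n" using assms(2) by auto
  from delta_n[rule_format, OF n this] obtain G R where "G \<subseteq> {a\<in>F. card a = n}" "uncountable G"
    "\<forall>a\<in>G. \<forall>b\<in>G. a \<noteq> b \<longrightarrow> a \<inter> b = R" by blast
  thus ?thesis by blast
qed



definition PP :: "'a set \<Rightarrow> 'a set set \<Rightarrow> ('a \<times> nat) set set" where
  "PP X \<A> = {p. finite p \<and> (\<forall>x c d. (x,c)\<in>p \<longrightarrow> (x,d)\<in>p \<longrightarrow> c = d) \<and> fst ` p \<subseteq> X \<and>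
      (\<forall>A\<in>\<A>. A \<subseteq> fst ` p \<longrightarrow> (\<exists>\<zeta>. card {x\<in>A. (x,\<zeta>)\<in>p} = 1))}"

definition HH :: "'a set set \<Rightarrow> nat \<Rightarrow> ('a \<times> nat) set \<Rightarrow> 'a set set" where
  "HH \<A> k p = {A\<in>\<A>. k + 1 \<le> card (A \<inter> fst ` p)}"

definition EE :: "'a set set \<Rightarrow> nat \<Rightarrow> ('a \<times> nat) set \<Rightarrow> 'a set" where
  "EE \<A> k p = fst ` p \<union> \<Union>(HH \<A> k p)"

lemma ad_fin:
  assumes ad: "almost_disjoint (k + 1) (UNIV :: nat set) \<A>" and F: "finite F" "k + 1 \<le> card F"
  shows "finite {A\<in>\<A>. F \<subseteq> A}"
proof (rule ccontr)
  assume "infinite {A\<in>\<A>. F \<subseteq> A}"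
  from infinite_countable_subset[OF this] obtain f :: "nat \<Rightarrow> 'a set"
    where f: "inj f" "range f \<subseteq> {A\<in>\<A>. F \<subseteq> A}" by blast
  have "range f \<approx> (UNIV :: nat set)" using f(1) by (rule inj_on_image_eqpoll_self)
  moreover have "range f \<subseteq> \<A>" using f(2) by auto
  ultimately have "finite (\<Inter>(range f)) \<and> card (\<Inter>(range f)) < k + 1"
    using ad unfolding almost_disjoint_def by blast
  moreover have "F \<subseteq> \<Inter>(range f)" using f(2) by auto
  ultimately have "card F \<le> card (\<Inter>(range f))" by (simp add: card_mono)
  with F(2) \<open>finite (\<Inter>(range f)) \<and> card (\<Inter>(range f)) < k + 1\<close> show False by simp
qed

lemma HH_finite:
  assumes ad: "almost_disjoint (k + 1) (UNIV :: nat set) \<A>" and p: "finite p"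
  shows "finite (HH \<A> k p)"
proof -
  let ?D = "fst ` p"
  have fD: "finite ?D" using p by simp
  have "HH \<A> k p \<subseteq> (\<Union>F\<in>{F. F \<subseteq> ?D \<and> card F = k + 1}. {A\<in>\<A>. F \<subseteq> A})"
  proof
    fix A assume "A \<in> HH \<A> k p"
    hence A: "A \<in> \<A>" "k + 1 \<le> card (A \<inter> ?D)" by (auto simp: HH_def)
    obtain F where F: "F \<subseteq> A \<inter> ?D" "card F = k + 1"
      using obtain_subset_with_card_n[OF A(2)] by blast
    thus "A \<in> (\<Union>F\<in>{F. F \<subseteq> ?D \<and> card F = k + 1}. {A\<in>\<A>. F \<subseteq> A})" using A(1) by auto
  qed
  moreover have "finite (\<Union>F\<in>{F. F \<subseteq> ?D \<and> card F = k + 1}. {A\<in>\<A>. F \<subseteq> A})"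
  proof (rule finite_UN_I)
    show "finite {F. F \<subseteq> ?D \<and> card F = k + 1}" using fD by (rule rev_finite_subset[OF finite_Pow_iff[THEN iffD2]]) auto
    fix F assume "F \<in> {F. F \<subseteq> ?D \<and> card F = k + 1}"
    hence "finite F" "k + 1 \<le> card F" using fD finite_subset by auto
    thus "finite {A\<in>\<A>. F \<subseteq> A}" using ad_fin[OF ad] by blast
  qed
  ultimately show ?thesis by (rule finite_subset)
qed

lemma EE_finite:
  assumes ad: "almost_disjoint (k + 1) (UNIV :: nat set) \<A>" and p: "finite p"
    and fin: "\<forall>A\<in>\<A>. finite A"
  shows "finite (EE \<A> k p)"
  unfolding EE_def using HH_finite[OF ad p] p fin by (auto simp: HH_def)



lemma PP_D:
  assumes "p \<in> PP X \<A>"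
  shows "finite p" "\<And>x c d. (x,c)\<in>p \<Longrightarrow> (x,d)\<in>p \<Longrightarrow> c = d" "fst ` p \<subseteq> X"
    "\<And>A. A\<in>\<A> \<Longrightarrow> A \<subseteq> fst ` p \<Longrightarrow> \<exists>\<zeta>. card {x\<in>A. (x,\<zeta>)\<in>p} = 1"
  using assms unfolding PP_def by blast+

lemma cf_sub:
  assumes p: "p \<in> PP X \<A>" and func: "\<And>x c d. (x,c)\<in>p \<union> q \<Longrightarrow> (x,d)\<in>p \<union> q \<Longrightarrow> c = d"
    and A: "A \<in> \<A>" "A \<subseteq> fst ` p"
  shows "\<exists>\<zeta>. card {x\<in>A. (x,\<zeta>)\<in>p \<union> q} = 1"
proof -
  obtain \<zeta> where z: "card {x\<in>A. (x,\<zeta>)\<in>p} = 1" using PP_D(4)[OF p A] by blast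
  have "{x\<in>A. (x,\<zeta>)\<in>p \<union> q} = {x\<in>A. (x,\<zeta>)\<in>p}"
  proof (intro equalityI subsetI)
    fix x assume x: "x \<in> {x\<in>A. (x,\<zeta>)\<in>p \<union> q}"
    hence "x \<in> fst ` p" using A(2) by auto
    then obtain c where c: "(x,c) \<in> p" by force
    have "c = \<zeta>" using func[of x c \<zeta>] c x by simp
    thus "x \<in> {x\<in>A. (x,\<zeta>)\<in>p}" using c x by simp
  qed simp
  hence "card {x\<in>A. (x,\<zeta>)\<in>p \<union> q} = 1" using z by (simp only:)
  thus ?thesis by blast
qed

lemma sub_dom:
  assumes R: "EE \<A> k p \<inter> EE \<A> k q = R" and pq: "p \<inter> (R \<times> UNIV) = q \<inter> (R \<times> UNIV)"
    and A: "A \<in> \<A>" "A \<subseteq> fst ` p \<union> fst ` q" "k + 1 \<le> card (A \<inter> fst ` p)"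
  shows "A \<subseteq> fst ` p"
proof
  fix x assume x: "x \<in> A"
  have "A \<in> HH \<A> k p" using A by (simp add: HH_def)
  hence xE: "x \<in> EE \<A> k p" using x unfolding EE_def by blast
  show "x \<in> fst ` p"
  proof (rule ccontr)
    assume nx: "x \<notin> fst ` p"
    hence "x \<in> fst ` q" using A(2) x by blast
    then obtain d where d: "(x,d) \<in> q" by force
    have "x \<in> EE \<A> k q" using d unfolding EE_def by force
    hence "x \<in> R" using xE R by blast
    hence "(x,d) \<in> q \<inter> (R \<times> UNIV)" using d by simp
    hence "(x,d) \<in> p" using pq by (metis IntD1)
    with nx show False by force
  qed
qed

lemma union_PP:
  assumes p: "p \<in> PP X \<A>" and q: "q \<in> PP X \<A>"
    and R: "EE \<A> k p \<inter> EE \<A> k q = R" and pq: "p \<inter> (R \<times> UNIV) = q \<inter> (R \<times> UNIV)"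
    and big: "\<forall>A\<in>\<A>. card A > 2 * k" and fin: "\<forall>A\<in>\<A>. finite A"
  shows "p \<union> q \<in> PP X \<A>"
proof -
  have func: "c = d" if "(x,c)\<in>p \<union> q" "(x,d)\<in>p \<union> q" for x c d
  proof -
    have cross: "c = d" if pc: "(x,c) \<in> p" and qd: "(x,d) \<in> q" for c d
    proof -
      have "x \<in> EE \<A> k p" using pc unfolding EE_def by force
      moreover have "x \<in> EE \<A> k q" using qd unfolding EE_def by force
      ultimately have "x \<in> R" using R by blast
      hence "(x,c) \<in> q" using pc pq by blast
      thus "c = d" using PP_D(2)[OF q] qd by blast
    qed
    show ?thesis using that PP_D(2)[OF p] PP_D(2)[OF q] cross by blast
  qed
  have cf: "\<exists>\<zeta>. card {x\<in>A. (x,\<zeta>)\<in>p \<union> q} = 1" if A: "A \<in> \<A>" "A \<subseteq> fst ` (p \<union> q)" for A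
  proof -
    have A2: "A \<subseteq> fst ` p \<union> fst ` q" using A(2) by (simp add: image_Un)
    have "A = (A \<inter> fst ` p) \<union> (A \<inter> fst ` q)" using A2 by blast
    hence "card A \<le> card (A \<inter> fst ` p) + card (A \<inter> fst ` q)" by (metis card_Un_le)
    moreover have "card A > 2 * k" using big A(1) by blast
    ultimately have "k + 1 \<le> card (A \<inter> fst ` p) \<or> k + 1 \<le> card (A \<inter> fst ` q)" by linarith
    thus ?thesis
    proof
      assume "k + 1 \<le> card (A \<inter> fst ` p)"
      hence "A \<subseteq> fst ` p" using sub_dom[OF R pq A(1) A2] by blast
      from cf_sub[OF p func A(1) this] show ?thesis .
    next
      assume "k + 1 \<le> card (A \<inter> fst ` q)"
      moreover have "EE \<A> k q \<inter> EE \<A> k p = R" using R by blast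
      moreover have "A \<subseteq> fst ` q \<union> fst ` p" using A2 by blast
      ultimately have "A \<subseteq> fst ` q" using sub_dom[of \<A> k q p R A] pq A(1) by simp
      moreover have func2: "c = d" if "(x,c)\<in>q \<union> p" "(x,d)\<in>q \<union> p" for x c d
        using func[of x c d] that by (simp add: Un_commute)
      ultimately have "\<exists>\<zeta>. card {x\<in>A. (x,\<zeta>)\<in>q \<union> p} = 1" by (intro cf_sub[OF q func2 A(1)])
      moreover have e: "q \<union> p = p \<union> q" by (rule Un_commute)
      ultimately show ?thesis by (simp only: e)
    qed
  qed
  have "finite (p \<union> q)" using PP_D(1)[OF p] PP_D(1)[OF q] by simp
  moreover have "fst ` (p \<union> q) \<subseteq> X" using PP_D(3)[OF p] PP_D(3)[OF q] by (simp add: image_Un)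
  ultimately show ?thesis using func cf unfolding PP_def by blast
qed



lemma countable_fin_funs:
  assumes "finite e"
  shows "countable {c :: ('a \<times> nat) set. finite c \<and> c \<subseteq> e \<times> UNIV}"
proof -
  have "countable (e \<times> (UNIV :: nat set))" using assms by (intro countable_SIGMA) (auto intro: countable_finite)
  thus ?thesis by (rule countable_Collect_finite_subset)
qed

lemma propK:
  assumes ad: "almost_disjoint (k + 1) (UNIV :: nat set) \<A>"
    and fin: "\<forall>A\<in>\<A>. finite A" and big: "\<forall>A\<in>\<A>. card A > 2 * k"
  shows "property_K (PP X \<A>) (\<lambda>q p. p \<subseteq> q)"
  unfolding property_K_def
proof (intro allI impI)
  fix S assume SP: "S \<subseteq> PP X \<A>" and uS: "uncountable S"
  let ?E = "EE \<A> k"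
  have finp: "finite p" if "p \<in> S" for p using that SP PP_D(1) by blast
  have finE: "finite (?E p)" if "p \<in> S" for p using EE_finite[OF ad finp[OF that] fin] .
  have uE: "uncountable (?E ` S)"
  proof
    assume "countable (?E ` S)"
    from unc_pigeon[OF uS this] obtain e where e: "uncountable {p\<in>S. ?E p = e}" by blast
    have "{p\<in>S. ?E p = e} \<subseteq> {c. finite c \<and> c \<subseteq> e \<times> UNIV}"
    proof
      fix p assume p: "p \<in> {p\<in>S. ?E p = e}"
      have "p \<subseteq> e \<times> UNIV"
      proof
        fix z assume "z \<in> p"
        hence "fst z \<in> ?E p" unfolding EE_def by blast
        thus "z \<in> e \<times> UNIV" using p by (cases z) simp
      qed
      thus "p \<in> {c. finite c \<and> c \<subseteq> e \<times> UNIV}" using finp p by simp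
    qed
    moreover have "finite e"
    proof -
      obtain p where "p \<in> S" "?E p = e" using e by (metis (mono_tags, lifting) empty_Collect_eq uncountable_def)
      thus ?thesis using finE by blast
    qed
    ultimately have "countable {p\<in>S. ?E p = e}" using countable_fin_funs countable_subset by blast
    with e show False by simp
  qed
  have finES: "\<forall>a\<in>?E ` S. finite a" using finE by blast
  have "\<exists>G'\<subseteq>?E ` S. uncountable G' \<and> (\<exists>R. \<forall>a\<in>G'. \<forall>b\<in>G'. a \<noteq> b \<longrightarrow> a \<inter> b = R)"
    by (rule delta_system[OF uE finES])
  then obtain G' where G'12: "G' \<subseteq> ?E ` S \<and> uncountable G'" and
    "\<exists>R. \<forall>a\<in>G'. \<forall>b\<in>G'. a \<noteq> b \<longrightarrow> a \<inter> b = R" by (elim exE conjE) simp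
  then obtain R where G'3: "\<forall>a\<in>G'. \<forall>b\<in>G'. a \<noteq> b \<longrightarrow> a \<inter> b = R" by (elim exE)
  have G': "G' \<subseteq> ?E ` S" "uncountable G'" "\<forall>a\<in>G'. \<forall>b\<in>G'. a \<noteq> b \<longrightarrow> a \<inter> b = R"
    using G'12 G'3 by simp_all
  define T0 where "T0 = inv_into S ?E ` G'"
  have T0S: "T0 \<subseteq> S" unfolding T0_def using G'(1) by (auto intro: inv_into_into)
  have "?E ` T0 = (\<lambda>e. ?E (inv_into S ?E e)) ` G'" unfolding T0_def by (rule image_image)
  also have "\<dots> = (\<lambda>e. e) ` G'"
  proof (rule image_cong[OF refl])
    fix e assume "e \<in> G'"
    hence "e \<in> ?E ` S" using G'(1) by blast
    thus "?E (inv_into S ?E e) = e" by (rule f_inv_into_f)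
  qed
  finally have ET0: "?E ` T0 = G'" by simp
  have uT0: "uncountable T0"
  proof
    assume "countable T0"
    hence "countable (?E ` T0)" by (rule countable_image)
    with ET0 G'(2) show False by simp
  qed
  have RT0: "?E p \<inter> ?E q = R" if h: "p \<in> T0" "q \<in> T0" "p \<noteq> q" for p q
  proof -
    obtain e1 where e1: "e1 \<in> G'" "p = inv_into S ?E e1" using h(1) unfolding T0_def by blast
    obtain e2 where e2: "e2 \<in> G'" "q = inv_into S ?E e2" using h(2) unfolding T0_def by blast
    have "e1 \<noteq> e2" using e1 e2 h(3) by blast
    moreover have "?E p = e1" using e1 G'(1) by (auto simp: f_inv_into_f)
    moreover have "?E q = e2" using e2 G'(1) by (auto simp: f_inv_into_f)
    ultimately show ?thesis using G'(3) e1 e2 by simp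
  qed
  have "finite R"
  proof -
    obtain p where p: "p \<in> T0" using uT0 by (metis countable_empty equals0I)
    have "T0 - {p} \<noteq> {}"
    proof
      assume "T0 - {p} = {}"
      hence "T0 \<subseteq> {p}" by blast
      hence "countable T0" by (rule countable_subset) simp
      with uT0 show False by simp
    qed
    then obtain q where q: "q \<in> T0" "q \<noteq> p" by blast
    have "R = ?E p \<inter> ?E q" using RT0[OF p q(1)] q(2) by simp
    moreover have "finite (?E p)" using finE p T0S by blast
    ultimately show ?thesis by simp
  qed
  let ?r = "\<lambda>p. p \<inter> (R \<times> UNIV)"
  have "?r ` T0 \<subseteq> {c. finite c \<and> c \<subseteq> R \<times> UNIV}" using finp T0S by blast
  hence "countable (?r ` T0)" using countable_fin_funs[OF \<open>finite R\<close>] countable_subset by blast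
  from unc_pigeon[OF uT0 this] obtain c0 where uT: "uncountable {p\<in>T0. ?r p = c0}" by blast
  define T where "T = {p\<in>T0. ?r p = c0}"
  have "T \<subseteq> S" using T0S unfolding T_def by blast
  moreover have "uncountable T" using uT unfolding T_def .
  moreover have "\<forall>p\<in>T. \<forall>q\<in>T. compatible (PP X \<A>) (\<lambda>q p. p \<subseteq> q) p q"
  proof (intro ballI)
    fix p q assume p: "p \<in> T" and q: "q \<in> T"
    have pP: "p \<in> PP X \<A>" and qP: "q \<in> PP X \<A>" using p q T0S SP unfolding T_def by blast+
    show "compatible (PP X \<A>) (\<lambda>q p. p \<subseteq> q) p q"
    proof (cases "p = q")
      case True
      thus ?thesis unfolding compatible_def using pP by blast
    next
      case False
      have R: "?E p \<inter> ?E q = R" using RT0 p q False unfolding T_def by blast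
      have pq: "?r p = ?r q" using p q unfolding T_def by simp
      have "p \<union> q \<in> PP X \<A>" using pP qP R pq big fin by (rule union_PP)
      show ?thesis unfolding compatible_def
      proof (rule bexI[of _ "p \<union> q"])
        show "p \<subseteq> p \<union> q \<and> q \<subseteq> p \<union> q" by simp
      qed fact
    qed
  qed
  ultimately show "\<exists>T\<subseteq>S. uncountable T \<and> (\<forall>p\<in>T. \<forall>q\<in>T. compatible (PP X \<A>) (\<lambda>q p. p \<subseteq> q) p q)"
    by (intro exI[of _ T] conjI)
qed



lemma PP_I:
  assumes "finite p" "\<And>x c d. (x,c)\<in>p \<Longrightarrow> (x,d)\<in>p \<Longrightarrow> c = d" "fst ` p \<subseteq> X"
    "\<And>A. A\<in>\<A> \<Longrightarrow> A \<subseteq> fst ` p \<Longrightarrow> \<exists>\<zeta>. card {x\<in>A. (x,\<zeta>)\<in>p} = 1"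
  shows "p \<in> PP X \<A>"
  using assms unfolding PP_def by blast

lemma dense_ext:
  assumes x: "x \<in> X" and p: "p \<in> PP X \<A>"
  shows "\<exists>d\<in>PP X \<A>. x \<in> fst ` d \<and> p \<subseteq> d"
proof (cases "x \<in> fst ` p")
  case True thus ?thesis using p by (intro bexI[of _ p]) auto
next
  case False
  have "finite (snd ` p)" using PP_D(1)[OF p] by simp
  then obtain c :: nat where c: "c \<notin> snd ` p" using ex_new_if_finite[OF infinite_UNIV_nat] by blast
  let ?d = "insert (x,c) p"
  have "?d \<in> PP X \<A>"
  proof (rule PP_I)
    show "finite ?d" using PP_D(1)[OF p] by simp
    show "fst ` ?d \<subseteq> X" using PP_D(3)[OF p] x by simp
    fix y a b assume ya: "(y,a) \<in> ?d" and yb: "(y,b) \<in> ?d"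
    show "a = b"
    proof (cases "y = x")
      case True
      hence "(y,a) \<notin> p" "(y,b) \<notin> p" using False by (metis fst_conv image_eqI)+
      thus ?thesis using ya yb by simp
    next
      case False
      hence "(y,a) \<in> p" "(y,b) \<in> p" using ya yb by auto
      thus ?thesis using PP_D(2)[OF p] by blast
    qed
  next
    fix A assume A: "A \<in> \<A>" "A \<subseteq> fst ` ?d"
    show "\<exists>\<zeta>. card {y\<in>A. (y,\<zeta>)\<in>?d} = 1"
    proof (cases "x \<in> A")
      case True
      have "{y\<in>A. (y,c)\<in>?d} = {x}"
      proof (intro equalityI subsetI)
        fix y assume "y \<in> {y\<in>A. (y,c)\<in>?d}"
        hence "(y,c) \<in> ?d" by simp
        moreover have "(y,c) \<notin> p" using c by (metis snd_conv image_eqI)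
        ultimately show "y \<in> {x}" by simp
      qed (use True in simp)
      thus ?thesis by (intro exI[of _ c]) simp
    next
      case xA: False
      have "A \<subseteq> fst ` p" using A(2) xA by auto
      then obtain \<zeta> where z: "card {y\<in>A. (y,\<zeta>)\<in>p} = 1" using PP_D(4)[OF p A(1)] by blast
      have "{y\<in>A. (y,\<zeta>)\<in>?d} = {y\<in>A. (y,\<zeta>)\<in>p}" using xA by auto
      thus ?thesis using z by (intro exI[of _ \<zeta>]) simp
    qed
  qed
  thus ?thesis by (intro bexI[of _ ?d]) auto
qed



theorem theorem2p2:
  fixes X :: "'a set" and k :: nat and \<A> :: "'a set set"
  assumes MA: "MA_K TYPE(('a \<times> nat) set) X"
    and fin: "\<forall>A\<in>\<A>. finite A \<and> A \<subseteq> X"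
    and ad: "almost_disjoint (k + 1) (UNIV :: nat set) \<A>"
    and big: "\<forall>A\<in>\<A>. card A > 2 * k"
  shows "cf_colorable \<A> (UNIV :: nat set)"
proof -
  let ?P = "PP X \<A>"
  let ?le = "\<lambda>q p :: ('a \<times> nat) set. p \<subseteq> q"
  have finA: "\<forall>A\<in>\<A>. finite A" using fin by blast
  have emp: "{} \<in> ?P"
  proof (rule PP_I)
    fix A assume A: "A \<in> \<A>" "A \<subseteq> fst ` {}"
    have "card A > 0" using big A(1) by fastforce
    moreover have "A = {}" using A(2) by simp
    ultimately show "\<exists>\<zeta>. card {x\<in>A. (x,\<zeta>)\<in>{}} = 1" by simp
  qed auto
  hence Pne: "?P \<noteq> {}" by blast
  have po: "partial_order_on' ?P ?le" unfolding partial_order_on'_def by blast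
  have K: "property_K ?P ?le" by (rule propK[OF ad finA big])
  define \<D> where "\<D> = (\<lambda>x. {p\<in>?P. x \<in> fst ` p}) ` X"
  have Dle: "\<D> \<lesssim> X" unfolding \<D>_def by (rule image_lepoll)
  have Dd: "\<forall>D\<in>\<D>. dense_in ?P ?le D"
  proof
    fix D assume "D \<in> \<D>"
    then obtain x where x: "x \<in> X" "D = {p\<in>?P. x \<in> fst ` p}" unfolding \<D>_def by blast
    show "dense_in ?P ?le D" unfolding dense_in_def
    proof (intro conjI ballI)
      show "D \<subseteq> ?P" using x(2) by blast
      fix p assume p: "p \<in> ?P"
      obtain d where d: "d \<in> ?P" "x \<in> fst ` d" "p \<subseteq> d" using dense_ext[OF x(1) p] by blast
      show "\<exists>d\<in>D. ?le d p" using d x(2) by blast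
    qed
  qed
  have MA': "?P \<noteq> {} \<and> partial_order_on' ?P ?le \<and> property_K ?P ?le \<Longrightarrow>
      \<D> \<lesssim> X \<and> (\<forall>D\<in>\<D>. dense_in ?P ?le D) \<Longrightarrow> \<exists>G. filter_in ?P ?le G \<and> (\<forall>D\<in>\<D>. G \<inter> D \<noteq> {})"
    using MA unfolding MA_K_def by (elim allE impE) simp_all
  have c1: "?P \<noteq> {} \<and> partial_order_on' ?P ?le \<and> property_K ?P ?le" using Pne po K by (intro conjI)
  have c2: "\<D> \<lesssim> X \<and> (\<forall>D\<in>\<D>. dense_in ?P ?le D)" using Dle Dd by (intro conjI)
  from MA'[OF c1 c2] obtain G where G: "filter_in ?P ?le G" and GD: "\<forall>D\<in>\<D>. G \<inter> D \<noteq> {}" by blast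
  have GP: "G \<subseteq> ?P" and Gne: "G \<noteq> {}" and Gdir0: "\<forall>p\<in>G. \<forall>q\<in>G. \<exists>r\<in>G. p \<subseteq> r \<and> q \<subseteq> r"
    using G unfolding filter_in_def by simp_all
  have Gdir: "\<exists>r\<in>G. p \<subseteq> r \<and> q \<subseteq> r" if "p \<in> G" "q \<in> G" for p q
    using Gdir0 that by blast
  have Gfun: "c = d" if h: "(x,c) \<in> p" "p \<in> G" "(x,d) \<in> q" "q \<in> G" for x c d p q
  proof -
    obtain r where r: "r \<in> G" "p \<subseteq> r" "q \<subseteq> r" using Gdir[OF h(2) h(4)] by blast
    have "r \<in> ?P" using r(1) GP by blast
    from PP_D(2)[OF this, of x c d] show "c = d" using r h(1,3) by blast
  qed
  have Gx: "\<exists>p\<in>G. x \<in> fst ` p" if "x \<in> X" for x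
  proof -
    have "{p\<in>?P. x \<in> fst ` p} \<in> \<D>" unfolding \<D>_def using that by blast
    hence "G \<inter> {p\<in>?P. x \<in> fst ` p} \<noteq> {}" using GD by blast
    thus ?thesis by blast
  qed
  have Gfin: "finite F \<Longrightarrow> F \<subseteq> X \<Longrightarrow> \<exists>r\<in>G. F \<subseteq> fst ` r" for F
  proof (induction F rule: finite_induct)
    case empty thus ?case using Gne by blast
  next
    case (insert x F)
    then obtain r1 where r1: "r1 \<in> G" "F \<subseteq> fst ` r1" by blast
    obtain p where p: "p \<in> G" "x \<in> fst ` p" using Gx insert(4) by blast
    obtain r where r: "r \<in> G" "r1 \<subseteq> r" "p \<subseteq> r" using Gdir[OF r1(1) p(1)] by blast
    have i1: "fst ` r1 \<subseteq> fst ` r" using r(2) by (rule image_mono)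
    have i2: "fst ` p \<subseteq> fst ` r" using r(3) by (rule image_mono)
    have "insert x F \<subseteq> fst ` r" using i1 i2 r1(2) p(2) by blast
    thus ?case using r(1) by blast
  qed
  define f where "f = (\<lambda>y. SOME c. \<exists>p\<in>G. (y,c) \<in> p)"
  have fval: "f y = c" if h: "(y,c) \<in> r" "r \<in> G" for y c r
  proof -
    have "\<exists>c. \<exists>p\<in>G. (y,c) \<in> p" using h by blast
    hence "\<exists>p\<in>G. (y, f y) \<in> p" unfolding f_def by (rule someI_ex)
    then obtain p where pG: "p \<in> G" and yp: "(y, f y) \<in> p" by blast
    from Gfun[OF yp pG h(1) h(2)] show ?thesis .
  qed
  have "cf_coloring \<A> f (UNIV :: nat set)" unfolding cf_coloring_def
  proof (intro conjI ballI)
    show "f ` \<Union>\<A> \<subseteq> UNIV" by simp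
    fix A assume A: "A \<in> \<A>"
    have "finite A" "A \<subseteq> X" using fin A by auto
    from Gfin[OF this] obtain r where r: "r \<in> G" "A \<subseteq> fst ` r" by blast
    have rP: "r \<in> ?P" using r GP by blast
    obtain \<zeta> where z: "card {x\<in>A. (x,\<zeta>)\<in>r} = 1" using PP_D(4)[OF rP A r(2)] by blast
    have "A \<inter> f -` {\<zeta>} = {x\<in>A. (x,\<zeta>)\<in>r}"
    proof (intro equalityI subsetI)
      fix x assume x: "x \<in> A \<inter> f -` {\<zeta>}"
      hence "x \<in> fst ` r" using r(2) by blast
      then obtain c where c: "(x,c) \<in> r" by force
      have "f x = c" using fval[OF c r(1)] .
      moreover have "f x = \<zeta>" using x by simp
      ultimately show "x \<in> {x\<in>A. (x,\<zeta>)\<in>r}" using c x by simp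
    next
      fix x assume x: "x \<in> {x\<in>A. (x,\<zeta>)\<in>r}"
      hence "f x = \<zeta>" using fval[of x \<zeta> r] r(1) by simp
      thus "x \<in> A \<inter> f -` {\<zeta>}" using x by simp
    qed
    thus "\<exists>\<zeta>. card (A \<inter> f -` {\<zeta>}) = 1" using z by (intro exI[of _ \<zeta>]) simp
  qed
  thus ?thesis unfolding cf_colorable_def by blast
qed

end
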